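(* Let $F$ and $p$ be positive integers and let $a$ be the smallest positive integer that does not divide $F$. Then $\mathrm{Sat}(F)$ contains at least one element of $\mathrm{Sat}(F)$-rank equal to $p$ if and only if $a(2^p-1)<F$.
   Context: A numerical semigroup is a subset $S\subseteq\mathbb{N}$ closed under addition, containing $0$, with $\mathbb{N}\setminus S$ finite; its Frobenius number $\mathrm{F}(S)$ is the largest integer not in $S$. For $A\subseteq\mathbb{N}$ and $a\in A$, let $\mathrm{d}_A(a)=\gcd\{x\in A\mid x\le a\}$. A numerical semigroup $S$ is saturated if $s+\mathrm{d}_S(s)\in S$ for all $s\in S\setminus\{0\}$. For a positive integer $F$, $\mathrm{Sat}(F)$ denotes the set of all saturated numerical semigroups $S$ with $\mathrm{F}(S)=F$. Let $\Delta(F+1)=\{0\}\cup\{x\in\mathbb{N}\mid x\ge F+1\}$. A set $X\subseteq\mathbb{N}$ is a $\mathrm{Sat}(F)$-set if $X\cap\Delta(F+1)=\emptyset$ and there exists $S\in\mathrm{Sat}(F)$ with $X\subseteq S$. For a $\mathrm{Sat}(F)$-set $X$, $\mathrm{Sat}(F)[X]$ denotes the intersection of all elements of $\mathrm{Sat}(F)$ containing $X$ (the smallest element of $\mathrm{Sat}(F)$ containing $X$). If $S=\mathrm{Sat}(F)[X]$, $X$ is a $\mathrm{Sat}(F)$-system of generators of $S$; it is minimal if $S\neq\mathrm{Sat}(F)[Y]$ for every proper subset $Y\subsetneq X$. Every $S\in\mathrm{Sat}(F)$ has a unique minimal $\mathrm{Sat}(F)$-system of generators, and its cardinality is the $\mathrm{Sat}(F)$-rank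 of $S$. *)

theory Defs
  imports Main
begin

definition numerical_semigroup :: "nat set \<Rightarrow> bool" where
  "numerical_semigroup S \<longleftrightarrow> 0 \<in> S \<and> (\<forall>x\<in>S. \<forall>y\<in>S. x + y \<in> S) \<and> finite (UNIV - S)"

definition frobenius :: "nat set \<Rightarrow> nat" where
  "frobenius S = Max (UNIV - S)"

definition dA :: "nat set \<Rightarrow> nat \<Rightarrow> nat" where
  "dA A a = Gcd {x \<in> A. x \<le> a}"

definition saturated :: "nat set \<Rightarrow> bool" where
  "saturated S \<longleftrightarrow> numerical_semigroup S \<and> (\<forall>s\<in>S. s \<noteq> 0 \<longrightarrow> s + dA S s \<in> S)"

definition Sat :: "nat \<Rightarrow> nat set set" where
  "Sat F = {S. saturated S \<and> UNIV - S \<noteq> {} \<and> frobenius S = F}"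

definition Delta :: "nat \<Rightarrow> nat set" where
  "Delta m = {0} \<union> {x. x \<ge> m}"

definition Sat_set :: "nat \<Rightarrow> nat set \<Rightarrow> bool" where
  "Sat_set F X \<longleftrightarrow> X \<inter> Delta (F + 1) = {} \<and> (\<exists>S\<in>Sat F. X \<subseteq> S)"

definition Sat_hull :: "nat \<Rightarrow> nat set \<Rightarrow> nat set" where
  "Sat_hull F X = \<Inter> {S \<in> Sat F. X \<subseteq> S}"

definition Sat_gen :: "nat \<Rightarrow> nat set \<Rightarrow> nat set \<Rightarrow> bool" where
  "Sat_gen F S X \<longleftrightarrow> Sat_set F X \<and> S = Sat_hull F X"

definition Sat_mingen :: "nat \<Rightarrow> nat set \<Rightarrow> nat set \<Rightarrow> bool" where
  "Sat_mingen F S X \<longleftrightarrow> Sat_gen F S X \<and> (\<forall>Y. Y \<subset> X \<longrightarrow> S \<noteq> Sat_hull F Y)"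

definition Sat_rank :: "nat \<Rightarrow> nat set \<Rightarrow> nat" where
  "Sat_rank F S = card (THE X. Sat_mingen F S X)"

end

theory Submission
  imports Defs
begin


lemma Gcd_sub_dvd: "(A::nat set) \<subseteq> B \<Longrightarrow> Gcd B dvd Gcd A"
  by (intro Gcd_greatest) (auto intro: Gcd_dvd)

lemma dA_mono: "a \<le> b \<Longrightarrow> dA S b dvd dA S a"
  unfolding dA_def by (rule Gcd_sub_dvd) auto

lemma dA_dvd: "x \<in> S \<Longrightarrow> dA S x dvd x"
  unfolding dA_def by (rule Gcd_dvd) auto

lemma dA_sub: "{z \<in> S. z \<le> x} \<subseteq> T \<Longrightarrow> dA T x dvd dA S x"
  unfolding dA_def by (rule Gcd_sub_dvd) auto

lemma dA_step_in: "y \<in> S \<Longrightarrow> 0 < y \<Longrightarrow> dA S y = gcd (dA S (y-1)) y"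
proof -
  assume "y \<in> S" "0 < y"
  then have "{z \<in> S. z \<le> y} = insert y {z \<in> S. z \<le> y - 1}" by auto
  then show ?thesis unfolding dA_def by (simp add: gcd.commute)
qed

lemma dA_step_out: "y \<notin> S \<Longrightarrow> 0 < y \<Longrightarrow> dA S y = dA S (y-1)"
proof -
  assume "y \<notin> S" "0 < y"
  have "z \<le> y \<longleftrightarrow> z \<le> y - 1" if "z \<in> S" for z
    using that \<open>y \<notin> S\<close> \<open>0 < y\<close> by (cases "z = y") auto
  then have "{z \<in> S. z \<le> y} = {z \<in> S. z \<le> y - 1}" by auto
  then show ?thesis unfolding dA_def by simp
qed

lemma sat_add:
  assumes "saturated S"
  shows "u \<in> S \<Longrightarrow> u \<noteq> 0 \<Longrightarrow> dA S u dvd t \<Longrightarrow> u + t \<in> S"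
proof (induction t arbitrary: u rule: less_induct)
  case (less t)
  show ?case
  proof (cases "t = 0")
    case True then show ?thesis using less by simp
  next
    case False
    define v where "v = u + dA S u"
    have v: "v \<in> S" using assms less.prems unfolding saturated_def v_def by blast
    have d0: "dA S u \<noteq> 0" using less.prems False by auto
    have "dA S u \<le> t" using less.prems False by (simp add: dvd_imp_le)
    have "dA S v dvd dA S u" unfolding v_def by (rule dA_mono) simp
    moreover have "dA S u dvd t - dA S u" using less.prems by (simp add: dvd_diff_nat)
    ultimately have "dA S v dvd t - dA S u" by (rule dvd_trans)
    moreover have "t - dA S u < t" using d0 False by simp
    moreover have "v \<noteq> 0" using v_def less.prems by simp
    ultimately have "v + (t - dA S u) \<in> S" using less.IH v by blast
    then show ?thesis using \<open>dA S u \<le> t\<close> unfolding v_def by simp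
  qed
qed

lemma Sat_props:
  assumes "S \<in> Sat F"
  shows "saturated S" "F \<notin> S" "\<And>y. F < y \<Longrightarrow> y \<in> S" "0 \<in> S"
    "\<And>x y. x \<in> S \<Longrightarrow> y \<in> S \<Longrightarrow> x + y \<in> S" "finite (UNIV - S)"
proof -
  have sat: "saturated S" and ne: "UNIV - S \<noteq> {}" and fr: "Max (UNIV - S) = F"
    using assms unfolding Sat_def frobenius_def by auto
  have fin: "finite (UNIV - S)" using sat unfolding saturated_def numerical_semigroup_def by blast
  show "saturated S" by (rule sat)
  show "finite (UNIV - S)" by (rule fin)
  show "F \<notin> S" using Max_in[OF fin ne] fr by auto
  show "\<And>y. F < y \<Longrightarrow> y \<in> S" using Max_ge[OF fin] fr by force
  show "0 \<in> S" using sat unfolding saturated_def numerical_semigroup_def by blast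
  show "\<And>x y. x \<in> S \<Longrightarrow> y \<in> S \<Longrightarrow> x + y \<in> S"
    using sat unfolding saturated_def numerical_semigroup_def by blast
qed

definition Xs :: "nat \<Rightarrow> nat set \<Rightarrow> nat set" where
  "Xs F S = {x \<in> S. 0 < x \<and> x < F \<and> \<not> dA S (x - 1) dvd x}"

lemma drop_const:
  assumes "x \<le> k" "k < F" "0 < x" "\<And>y. x < y \<Longrightarrow> y \<le> k \<Longrightarrow> y \<notin> Xs F S"
  shows "dA S k = dA S x"
  using assms
proof (induction k rule: dec_induct)
  case base then show ?case by simp
next
  case (step k)
  have IH: "dA S k = dA S x" using step by simp
  have nx: "Suc k \<notin> Xs F S" using step by simp
  show ?case
  proof (cases "Suc k \<in> S")
    case True
    then have "dA S k dvd Suc k" using nx step.prems unfolding Xs_def by auto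
    then show ?thesis using dA_step_in[OF True] IH by (simp add: gcd_nat.absorb1)
  next
    case False then show ?thesis using dA_step_out[OF False] IH by simp
  qed
qed

lemma first_Xs:
  assumes "S \<in> Sat F" "s \<in> S" "0 < s" "s < F"
  shows "\<exists>x\<in>Xs F S. x \<le> s"
proof -
  define m where "m = (LEAST z. z \<in> S \<and> 0 < z)"
  have m: "m \<in> S" "0 < m" using LeastI[of "\<lambda>z. z \<in> S \<and> 0 < z" s] assms m_def by auto
  have ms: "m \<le> s" using Least_le[of "\<lambda>z. z \<in> S \<and> 0 < z" s] assms m_def by auto
  have "{z \<in> S. z \<le> m - 1} = {0}"
  proof -
    have "z = 0" if "z \<in> S" "z \<le> m - 1" for z
    proof (rule ccontr)
      assume "z \<noteq> 0"
      then have "m \<le> z" using Least_le[of "\<lambda>z. z \<in> S \<and> 0 < z" z] that m_def by auto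
      then show False using that m by linarith
    qed
    then show ?thesis using Sat_props(4)[OF assms(1)] by auto
  qed
  then have "dA S (m - 1) = 0" unfolding dA_def by simp
  then have "m \<in> Xs F S" using m ms assms unfolding Xs_def by auto
  then show ?thesis using ms by blast
qed

lemma sub_lemma:
  assumes S: "S \<in> Sat F" and T: "T \<in> Sat F" and X: "Xs F S \<subseteq> T"
  shows "S \<subseteq> T"
proof -
  have "s \<in> S \<longrightarrow> s \<in> T" for s
  proof (induction s rule: less_induct)
    case (less s)
    show ?case
    proof
      assume sS: "s \<in> S"
      consider "s = 0" | "s = F" | "F < s" | "0 < s \<and> s < F" by linarith
      then show "s \<in> T"
      proof cases
        case 1 then show ?thesis using Sat_props(4)[OF T] by simp
      next
        case 2 then show ?thesis using Sat_props(2)[OF S] sS by simp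
      next
        case 3 then show ?thesis using Sat_props(3)[OF T] by simp
      next
        case 4
        define A where "A = {y \<in> Xs F S. y \<le> s}"
        have finA: "finite A" unfolding A_def by auto
        have neA: "A \<noteq> {}" using first_Xs[OF S sS] 4 unfolding A_def by auto
        define x where "x = Max A"
        have xA: "x \<in> A" using Max_in[OF finA neA] x_def by simp
        then have xX: "x \<in> Xs F S" and xs: "x \<le> s" unfolding A_def by auto
        have xpos: "0 < x" using xX unfolding Xs_def by auto
        show ?thesis
        proof (cases "x = s")
          case True then show ?thesis using xX X by auto
        next
          case False
          then have xls: "x < s" using xs by simp
          have "dA S s = dA S x"
          proof (rule drop_const[OF xs _ xpos])
            show "s < F" using 4 by simp
            fix y assume "x < y" "y \<le> s"
            show "y \<notin> Xs F S"
            proof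
              assume "y \<in> Xs F S"
              then have "y \<in> A" unfolding A_def using \<open>y \<le> s\<close> by simp
              then have "y \<le> x" using Max_ge[OF finA] x_def by simp
              then show False using \<open>x < y\<close> by simp
            qed
          qed
          then have "dA S x dvd s" using dA_dvd[OF sS] by simp
          then have d1: "dA S x dvd s - x" using dA_dvd xX unfolding Xs_def
            by (simp add: dvd_diff_nat)
          have "{z \<in> S. z \<le> x} \<subseteq> T" using less.IH xls by auto
          then have "dA T x dvd dA S x" by (rule dA_sub)
          then have "dA T x dvd s - x" using d1 by (rule dvd_trans)
          then have "x + (s - x) \<in> T"
            using sat_add[OF Sat_props(1)[OF T]] xX X xpos by blast
          then show ?thesis using xls by simp
        qed
      qed
    qed
  qed
  then show ?thesis by blast
qed

lemma remove_lemma: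
  assumes S: "S \<in> Sat F" and x0: "x0 \<in> Xs F S"
  shows "S - {x0} \<in> Sat F"
proof -
  define D where "D = dA S (x0 - 1)"
  have x0S: "x0 \<in> S" and x0p: "0 < x0" and x0F: "x0 < F" and nD: "\<not> D dvd x0"
    using x0 unfolding Xs_def D_def by auto
  have Ddvd: "D dvd z" if "z \<in> S" "z < x0" for z
  proof -
    have "D dvd dA S z" unfolding D_def by (rule dA_mono) (use that in simp)
    then show ?thesis using dA_dvd[OF that(1)] by (rule dvd_trans)
  qed
  have sat: "saturated S" using Sat_props(1)[OF S] .
  let ?T = "S - {x0}"
  have ns: "numerical_semigroup ?T"
    unfolding numerical_semigroup_def
  proof (intro conjI ballI)
    show "0 \<in> ?T" using Sat_props(4)[OF S] x0p by simp
  next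
    fix x y assume xy: "x \<in> ?T" "y \<in> ?T"
    have "x + y \<in> S" using Sat_props(5)[OF S] xy by simp
    moreover have "x + y \<noteq> x0"
    proof
      assume e: "x + y = x0"
      show False
      proof (cases "x = 0 \<or> y = 0")
        case True then show False using e xy by auto
      next
        case False
        then have "x < x0" "y < x0" using e by auto
        then have "D dvd x" "D dvd y" using Ddvd xy by auto
        then have "D dvd x0" using e by auto
        then show False using nD by simp
      qed
    qed
    ultimately show "x + y \<in> ?T" by simp
  next
    have "UNIV - ?T = insert x0 (UNIV - S)" using x0S by auto
    then show "finite (UNIV - ?T)" using Sat_props(6)[OF S] by simp
  qed
  have satT: "saturated ?T"
    unfolding saturated_def
  proof (intro conjI ns ballI impI)
    fix y assume yT: "y \<in> ?T" and y0: "y \<noteq> 0"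
    show "y + dA ?T y \<in> ?T"
    proof (cases "y < x0")
      case True
      have eq: "{z \<in> ?T. z \<le> y} = {z \<in> S. z \<le> y}" using True by auto
      have "dA ?T y = dA S y" unfolding dA_def using eq by simp
      moreover have "y + dA S y \<in> S" using sat yT y0 unfolding saturated_def by blast
      moreover have "y + dA S y \<noteq> x0"
      proof
        assume e: "y + dA S y = x0"
        have "D dvd dA S y" unfolding D_def by (rule dA_mono) (use True in simp)
        moreover have "D dvd y" using Ddvd yT True by auto
        ultimately have "D dvd x0" using e dA_dvd yT by (metis dvd_add)
        then show False using nD by simp
      qed
      ultimately show ?thesis by simp
    next
      case False
      then have yg: "x0 < y" using yT by auto
      have "dA S y dvd dA ?T y" by (rule dA_sub) auto
      then have "y + dA ?T y \<in> S" using sat_add[OF sat] yT y0 by blast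
      then show ?thesis using yg by simp
    qed
  qed
  have fin: "finite (UNIV - S)" and ne: "UNIV - S \<noteq> {}" and fr: "Max (UNIV - S) = F"
    using S Sat_props(6)[OF S] unfolding Sat_def frobenius_def by auto
  have "UNIV - ?T = insert x0 (UNIV - S)" using x0S by auto
  then have "Max (UNIV - ?T) = max x0 F" using Max_insert[OF fin ne] fr by simp
  then have "frobenius ?T = F" unfolding frobenius_def using x0F by simp
  then show ?thesis unfolding Sat_def using satT by auto
qed

lemma hull_eq:
  assumes S: "S \<in> Sat F" and "Xs F S \<subseteq> X" "X \<subseteq> S"
  shows "Sat_hull F X = S"
proof
  show "Sat_hull F X \<subseteq> S" unfolding Sat_hull_def using S assms by auto
  show "S \<subseteq> Sat_hull F X" unfolding Sat_hull_def using sub_lemma[OF S] assms by blast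
qed

lemma hull_not:
  assumes S: "S \<in> Sat F" and "Y \<subseteq> S" "x0 \<in> Xs F S" "x0 \<notin> Y"
  shows "Sat_hull F Y \<noteq> S"
proof -
  have "S - {x0} \<in> Sat F" using remove_lemma[OF S assms(3)] .
  then have "Sat_hull F Y \<subseteq> S - {x0}" unfolding Sat_hull_def using assms by auto
  moreover have "x0 \<in> S" using assms unfolding Xs_def by auto
  ultimately show ?thesis by auto
qed

lemma mingen_iff:
  assumes S: "S \<in> Sat F"
  shows "Sat_mingen F S X \<longleftrightarrow> X = Xs F S"
proof
  assume m: "Sat_mingen F S X"
  then have h: "S = Sat_hull F X" unfolding Sat_mingen_def Sat_gen_def by auto
  have "X \<subseteq> Sat_hull F X" unfolding Sat_hull_def by auto
  then have XS: "X \<subseteq> S" using h by simp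
  have sub: "Xs F S \<subseteq> X"
  proof
    fix x assume "x \<in> Xs F S"
    then show "x \<in> X" using hull_not[OF S XS, of x] h by auto
  qed
  show "X = Xs F S"
  proof (rule ccontr)
    assume "X \<noteq> Xs F S"
    then have "Xs F S \<subset> X" using sub by auto
    then have "S \<noteq> Sat_hull F (Xs F S)" using m unfolding Sat_mingen_def by blast
    moreover have "Sat_hull F (Xs F S) = S" using hull_eq[OF S] XS sub by auto
    ultimately show False by simp
  qed
next
  assume X: "X = Xs F S"
  have XS: "X \<subseteq> S" using X unfolding Xs_def by auto
  have "Sat_set F X" unfolding Sat_set_def Delta_def using X XS S unfolding Xs_def by auto
  moreover have "S = Sat_hull F X" using hull_eq[OF S] X XS by auto
  moreover have "\<forall>Y. Y \<subset> X \<longrightarrow> S \<noteq> Sat_hull F Y"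
  proof (intro allI impI)
    fix Y assume "Y \<subset> X"
    then obtain x0 where "x0 \<in> X" "x0 \<notin> Y" "Y \<subseteq> S" using XS by auto
    then show "S \<noteq> Sat_hull F Y" using hull_not[OF S, of Y x0] X by auto
  qed
  ultimately show "Sat_mingen F S X" unfolding Sat_mingen_def Sat_gen_def by auto
qed

lemma rank_eq:
  assumes S: "S \<in> Sat F"
  shows "Sat_rank F S = card (Xs F S)"
proof -
  have "(THE X. Sat_mingen F S X) = Xs F S"
    by (rule the_equality) (auto simp: mingen_iff[OF S])
  then show ?thesis unfolding Sat_rank_def by simp
qed



lemma chain_bound:
  assumes S: "S \<in> Sat F"
  shows "x \<in> Xs F S \<Longrightarrow> dA S x * 2 ^ card {y \<in> Xs F S. y \<le> x} \<le> x + dA S x"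
proof (induction x rule: less_induct)
  case (less x)
  have xS: "x \<in> S" and xp: "0 < x" and xF: "x < F" and nd: "\<not> dA S (x-1) dvd x"
    using less.prems unfolding Xs_def by auto
  define d where "d = dA S x"
  have dx: "d dvd x" using dA_dvd[OF xS] d_def by simp
  define B where "B = {y \<in> Xs F S. y < x}"
  have finB: "finite B" unfolding B_def Xs_def by auto
  show ?case
  proof (cases "B = {}")
    case True
    then have "{y \<in> Xs F S. y \<le> x} = {x}" using less.prems unfolding B_def by force
    moreover have "d \<le> x" using dx xp by (simp add: dvd_imp_le)
    ultimately show ?thesis unfolding d_def[symmetric] by simp
  next
    case False
    define x' where "x' = Max B"
    have x'B: "x' \<in> B" using Max_in[OF finB False] x'_def by simp
    then have x'X: "x' \<in> Xs F S" and x'x: "x' < x" unfolding B_def by auto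
    have x'p: "0 < x'" and x'S: "x' \<in> S" using x'X unfolding Xs_def by auto
    define d' where "d' = dA S x'"
    define k where "k = card {y \<in> Xs F S. y \<le> x'}"
    have IH: "d' * 2 ^ k \<le> x' + d'" using less.IH[OF x'x x'X] d'_def k_def by simp
    have noX: "y \<notin> Xs F S" if "x' < y" "y < x" for y
    proof
      assume "y \<in> Xs F S"
      then have "y \<in> B" unfolding B_def using that by simp
      then have "y \<le> x'" using Max_ge[OF finB] x'_def by simp
      then show False using that by simp
    qed
    have seteq: "{y \<in> Xs F S. y \<le> x} = insert x {y \<in> Xs F S. y \<le> x'}"
      using noX less.prems x'x by (auto simp: not_less) (meson leI le_less noX)
    have fin2: "finite {y \<in> Xs F S. y \<le> x'}" by simp
    have "card {y \<in> Xs F S. y \<le> x} = Suc k"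
      unfolding seteq k_def using x'x by (subst card_insert_disjoint[OF fin2]) auto
    have "dA S (x - 1) = d'" unfolding d'_def
      by (rule drop_const[where F=F]) (use x'x xF x'p noX in auto)
    then have nd': "\<not> d' dvd x" using nd by simp
    have dg: "d = gcd d' x" using dA_step_in[OF xS xp] \<open>dA S (x - 1) = d'\<close> d_def by simp
    have d'x': "d' dvd x'" using dA_dvd[OF x'S] d'_def by simp
    have d'0: "d' \<noteq> 0" using d'x' x'p by auto
    have dd': "d dvd d'" using dg by simp
    then obtain c where c: "d' = d * c" by blast
    have "c \<noteq> 1" using c nd' dx by auto
    moreover have "c \<noteq> 0" using c d'0 by auto
    ultimately have "c \<ge> 2" by simp
    then have two: "2 * d \<le> d'" using c by simp
    have "d dvd x'" using dd' d'x' by (rule dvd_trans)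
    then have "d dvd x - x'" using dx by (simp add: dvd_diff_nat)
    moreover have "0 < x - x'" using x'x by simp
    ultimately have gap: "d \<le> x - x'" by (simp add: dvd_imp_le)
    define K where "K = (2::nat) ^ k"
    have K1: "1 \<le> K" unfolding K_def by simp
    have h1: "d' - 2 * d \<le> (d' - 2*d) * K" using K1 by simp
    have h2: "d' * K = 2 * d * K + (d' - 2*d) * K" using two by (simp add: add_mult_distrib[symmetric])
    have IH': "d' * K \<le> x' + d'" using IH K_def by simp
    have "2 * d * K \<le> x + d" using h1 h2 IH' two gap x'x by linarith
    then show ?thesis using \<open>card {y \<in> Xs F S. y \<le> x} = Suc k\<close> K_def d_def by (simp add: mult.commute mult.left_commute)
  qed
qed

lemma forward:
  assumes S: "S \<in> Sat F" and p: "card (Xs F S) = p" "0 < p"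
  shows "(LEAST a::nat. a > 0 \<and> \<not> a dvd F) * (2 ^ p - 1) < F"
proof -
  have fin: "finite (Xs F S)" unfolding Xs_def by auto
  have ne: "Xs F S \<noteq> {}" using p by auto
  define x where "x = Max (Xs F S)"
  have xX: "x \<in> Xs F S" using Max_in[OF fin ne] x_def by simp
  have "{y \<in> Xs F S. y \<le> x} = Xs F S" using Max_ge[OF fin] x_def by auto
  then have cb: "dA S x * 2 ^ p \<le> x + dA S x" using chain_bound[OF S xX] p by simp
  have xS: "x \<in> S" and xp: "0 < x" and xF: "x < F" using xX unfolding Xs_def by auto
  define d where "d = dA S x"
  have dx: "d dvd x" using dA_dvd[OF xS] d_def by simp
  have d0: "0 < d" using dx xp by (cases "d = 0") auto
  have ndF: "\<not> d dvd F"
  proof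
    assume "d dvd F"
    then have "d dvd F - x" using dx by (simp add: dvd_diff_nat)
    then have "x + (F - x) \<in> S" using sat_add[OF Sat_props(1)[OF S] xS] xp d_def by simp
    then show False using xF Sat_props(2)[OF S] by simp
  qed
  have "(LEAST a::nat. a > 0 \<and> \<not> a dvd F) \<le> d" by (rule Least_le) (use d0 ndF in simp)
  then have "(LEAST a::nat. a > 0 \<and> \<not> a dvd F) * (2 ^ p - 1) \<le> d * (2 ^ p - 1)" by simp
  also have "\<dots> = d * 2 ^ p - d" by (simp add: diff_mult_distrib2)
  also have "\<dots> \<le> x" using cb d_def by simp
  finally show ?thesis using xF by simp
qed



definition sv :: "nat \<Rightarrow> nat \<Rightarrow> nat \<Rightarrow> nat" where
  "sv a p j = a * 2 ^ p - a * 2 ^ j"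

definition lev :: "nat \<Rightarrow> nat \<Rightarrow> nat \<Rightarrow> nat" where
  "lev a p y = (LEAST j. sv a p j \<le> y)"

definition Sc :: "nat \<Rightarrow> nat \<Rightarrow> nat \<Rightarrow> nat set" where
  "Sc F a p = {y. F < y} \<union> {y. y < F \<and> (y = 0 \<or> (lev a p y < p \<and> a * 2 ^ lev a p y dvd y))}"

lemma sv_anti: "j \<le> j' \<Longrightarrow> sv a p j' \<le> sv a p j"
  unfolding sv_def by (intro diff_le_mono2 mult_le_mono2) simp

lemma sv_strict: "j < j' \<Longrightarrow> j' \<le> p \<Longrightarrow> 0 < a \<Longrightarrow> sv a p j' < sv a p j"
proof -
  assume h: "j < j'" "j' \<le> p" "0 < a"
  have "a * 2 ^ j < a * 2 ^ j'" using h by simp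
  moreover have "a * 2 ^ j' \<le> a * 2 ^ p" using h by simp
  ultimately show ?thesis unfolding sv_def by linarith
qed

lemma sv_p: "sv a p p = 0" unfolding sv_def by simp

lemma lev_le_p: "lev a p y \<le> p"
  unfolding lev_def by (rule Least_le) (simp add: sv_p)

lemma lev_sv: "sv a p (lev a p y) \<le> y"
  unfolding lev_def by (rule LeastI[of _ p]) (simp add: sv_p)

lemma lev_less: "j < lev a p y \<Longrightarrow> y < sv a p j"
  unfolding lev_def using not_less_Least by (metis not_le)

lemma lev_mono: "y \<le> y' \<Longrightarrow> lev a p y' \<le> lev a p y"
  unfolding lev_def by (rule Least_le) (use lev_sv[of a p y] in \<open>simp add: lev_def\<close>)

lemma lev_of_sv: "j \<le> p \<Longrightarrow> 0 < a \<Longrightarrow> lev a p (sv a p j) = j"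
  unfolding lev_def
proof (rule Least_equality)
  show "sv a p j \<le> sv a p j" by simp
  fix y assume "j \<le> p" "0 < a" "sv a p y \<le> sv a p j"
  then show "j \<le> y" using sv_strict[of y j p a] by (cases "y < j") auto
qed

lemma lev_sv_minus: "j < p \<Longrightarrow> 0 < a \<Longrightarrow> lev a p (sv a p j - 1) = Suc j"
  unfolding lev_def
proof (rule Least_equality)
  assume h: "j < p" "0 < a"
  show "sv a p (Suc j) \<le> sv a p j - 1" using sv_strict[of j "Suc j" p a] h by simp
  fix y assume "sv a p y \<le> sv a p j - 1"
  moreover have "0 < sv a p j" using sv_strict[of j p p a] h sv_p[of a p] by simp
  ultimately show "Suc j \<le> y" using sv_anti[of y j a p] by (cases "y \<le> j") auto
qed

locale cons =
  fixes F a p :: nat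
  assumes a0: "0 < a" and ndF: "\<not> a dvd F" and small: "a * (2 ^ p - 1) < F" and p0: "0 < p"
begin

abbreviation "S \<equiv> Sc F a p"
abbreviation "L \<equiv> lev a p"
abbreviation "s \<equiv> sv a p"

lemma F0: "0 < F" using ndF by (cases F) auto

lemma sv_lt_F: "s j < F"
proof -
  have "s j \<le> s 0" by (rule sv_anti) simp
  also have "s 0 = a * (2 ^ p - 1)" unfolding sv_def by (simp add: diff_mult_distrib2)
  finally show ?thesis using small by simp
qed

lemma a_dvd: "y \<in> S \<Longrightarrow> y < F \<Longrightarrow> a dvd y"
  unfolding Sc_def using dvd_mult_left by auto

lemma pow_dvd: "i \<le> j \<Longrightarrow> a * 2 ^ i dvd a * (2::nat) ^ j"
  by (intro mult_dvd_mono) (auto simp: le_imp_power_dvd)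

lemma below_dvd: "y < F \<Longrightarrow> z \<in> S \<Longrightarrow> z \<le> y \<Longrightarrow> a * 2 ^ L y dvd z"
proof -
  assume h: "y < F" "z \<in> S" "z \<le> y"
  then have "z = 0 \<or> (L z < p \<and> a * 2 ^ L z dvd z)" unfolding Sc_def by auto
  moreover have "L y \<le> L z" using h(3) by (rule lev_mono)
  ultimately show ?thesis using pow_dvd dvd_trans by blast
qed

lemma sv_in: "j < p \<Longrightarrow> s j \<in> S"
proof -
  assume j: "j < p"
  have "L (s j) = j" using lev_of_sv[of j p a] j a0 by simp
  moreover have "a * 2 ^ j dvd s j" unfolding sv_def
    using pow_dvd[of j p] j by (intro dvd_diff_nat) auto
  ultimately show ?thesis unfolding Sc_def using sv_lt_F j by auto
qed

lemma ns: "numerical_semigroup S"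
  unfolding numerical_semigroup_def
proof (intro conjI ballI)
  show "0 \<in> S" unfolding Sc_def using F0 by simp
next
  fix x y assume xy: "x \<in> S" "y \<in> S"
  show "x + y \<in> S"
  proof (cases "x = 0 \<or> y = 0")
    case True then show ?thesis using xy by auto
  next
    case False
    show ?thesis
    proof (cases "F < x + y")
      case True then show ?thesis unfolding Sc_def by simp
    next
      case False2: False
      then have xF: "x < F" and yF: "y < F" using False by auto
      have "a dvd x + y" using a_dvd xy xF yF by simp
      then have ne: "x + y \<noteq> F" using ndF by auto
      have "L (x + y) \<le> L x" by (rule lev_mono) simp
      moreover have "L x < p" using xy xF False unfolding Sc_def by auto
      moreover have "a * 2 ^ L (x+y) dvd x + y"
        using below_dvd[of "x+y" x] below_dvd[of "x+y" y] xy False2 ne by simp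
      ultimately show ?thesis unfolding Sc_def using False2 ne by auto
    qed
  qed
next
  have "UNIV - S \<subseteq> {..F}" unfolding Sc_def by auto
  then show "finite (UNIV - S)" by (rule finite_subset) simp
qed

lemma sat: "saturated S"
  unfolding saturated_def
proof (intro conjI ns ballI impI)
  fix y assume yS: "y \<in> S" and y0: "y \<noteq> 0"
  show "y + dA S y \<in> S"
  proof (cases "F < y")
    case True then show ?thesis unfolding Sc_def by simp
  next
    case False
    then have yF: "y < F" using yS unfolding Sc_def by auto
    have Ly: "L y < p" using yS yF y0 unfolding Sc_def by auto
    have D: "a * 2 ^ L y dvd dA S y" unfolding dA_def
      by (rule Gcd_greatest) (use below_dvd yF in auto)
    have D2: "a * 2 ^ L y dvd y + dA S y" using D below_dvd[of y y] yS yF by simp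
    then have "a dvd y + dA S y" using dvd_mult_left by blast
    then have ne: "y + dA S y \<noteq> F" using ndF by auto
    obtain v where v: "v = y + dA S y" by blast
    have "v \<in> S"
    proof (cases "F < v")
      case True then show ?thesis unfolding Sc_def by simp
    next
      case False
      have "L v \<le> L y" unfolding v by (rule lev_mono) simp
      moreover have "a * 2 ^ L v dvd v"
        using pow_dvd[OF calculation] D2 dvd_trans v by blast
      ultimately show ?thesis unfolding Sc_def using False ne Ly v by auto
    qed
    then show ?thesis using v by simp
  qed
qed

lemma inSat: "S \<in> Sat F"
proof -
  have fin: "finite (UNIV - S)" using ns unfolding numerical_semigroup_def by blast
  have FS: "F \<in> UNIV - S" unfolding Sc_def by simp
  have "Max (UNIV - S) = F"
  proof (rule Max_eqI[OF fin _ FS])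
    fix y assume "y \<in> UNIV - S"
    then show "y \<le> F" unfolding Sc_def by (auto simp: not_less)
  qed
  then show ?thesis unfolding Sat_def frobenius_def using sat FS by auto
qed

lemma dA_S: "y < F \<Longrightarrow> L y < p \<Longrightarrow> dA S y = a * 2 ^ L y"
proof -
  assume yF: "y < F" and Ly: "L y < p"
  have D: "a * 2 ^ L y dvd dA S y" unfolding dA_def
    by (rule Gcd_greatest) (use below_dvd yF in auto)
  have svL: "s (L y) \<le> y" by (rule lev_sv)
  have "dA S y dvd s (L y)" unfolding dA_def by (rule Gcd_dvd) (use sv_in Ly svL in auto)
  moreover have "dA S y dvd a * 2 ^ L y"
  proof (cases "Suc (L y) < p")
    case True
    have "s (Suc (L y)) \<le> y" using sv_strict[of "L y" "Suc (L y)" p a] True a0 svL by simp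
    then have "dA S y dvd s (Suc (L y))" unfolding dA_def
      by (intro Gcd_dvd) (use sv_in True in auto)
    moreover have "s (L y) - s (Suc (L y)) = a * 2 ^ L y"
    proof -
      have "a * 2 ^ Suc (L y) \<le> a * 2 ^ p" using True by (intro mult_le_mono2 power_increasing) auto
      moreover have "a * 2 ^ Suc (L y) = 2 * (a * 2 ^ L y)" by simp
      ultimately show ?thesis unfolding sv_def by linarith
    qed
    ultimately show ?thesis using \<open>dA S y dvd s (L y)\<close> by (metis dvd_diff_nat)
  next
    case False
    then have "Suc (L y) = p" using Ly by simp
    then have "s (L y) = a * 2 ^ L y" unfolding sv_def by (metis mult_2 power_Suc add_diff_cancel_right' mult.left_commute)
    then show ?thesis using \<open>dA S y dvd s (L y)\<close> by simp
  qed
  ultimately show ?thesis using D by (simp add: dvd_antisym)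
qed

lemma dA_S0: "y < F \<Longrightarrow> L y = p \<Longrightarrow> dA S y = 0"
proof -
  assume yF: "y < F" and Ly: "L y = p"
  have "{z \<in> S. z \<le> y} = {0}"
  proof -
    have "z = 0" if "z \<in> S" "z \<le> y" for z
    proof (rule ccontr)
      assume "z \<noteq> 0"
      then have "L z < p" using that yF unfolding Sc_def by auto
      moreover have "L y \<le> L z" using that(2) by (rule lev_mono)
      ultimately show False using Ly by simp
    qed
    then show ?thesis using ns unfolding numerical_semigroup_def by auto
  qed
  then show ?thesis unfolding dA_def by simp
qed

lemma Xs_eq: "Xs F S = s ` {..<p}"
proof
  show "Xs F S \<subseteq> s ` {..<p}"
  proof
    fix x assume "x \<in> Xs F S"
    then have xS: "x \<in> S" and xp: "0 < x" and xF: "x < F" and nd: "\<not> dA S (x - 1) dvd x"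
      unfolding Xs_def by auto
    have Lx: "L x < p" and dx: "a * 2 ^ L x dvd x" using xS xp xF unfolding Sc_def by auto
    have "s (L x) = x"
    proof (rule ccontr)
      assume "s (L x) \<noteq> x"
      then have "s (L x) \<le> x - 1" using lev_sv[of a p x] by simp
      then have "L (x - 1) \<le> L x" unfolding lev_def[of a p "x-1"] by (rule Least_le)
      moreover have "L x \<le> L (x - 1)" by (rule lev_mono) simp
      ultimately have "L (x - 1) = L x" by simp
      then have "dA S (x - 1) = a * 2 ^ L x" using dA_S[of "x-1"] Lx xF by simp
      then show False using nd dx by simp
    qed
    then show "x \<in> s ` {..<p}" using Lx by force
  qed
next
  show "s ` {..<p} \<subseteq> Xs F S"
  proof
    fix x assume "x \<in> s ` {..<p}"
    then obtain j where j: "j < p" and x: "x = s j" by auto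
    have xS: "x \<in> S" using sv_in j x by simp
    have xp: "0 < x" using sv_strict[of j p p a] j a0 sv_p[of a p] x by simp
    have xF: "x < F" using sv_lt_F x by simp
    have Lm: "L (x - 1) = Suc j" using lev_sv_minus[of j p a] j a0 x by simp
    have "\<not> dA S (x - 1) dvd x"
    proof (cases "Suc j < p")
      case True
      then have dA: "dA S (x - 1) = a * 2 ^ Suc j" using dA_S[of "x-1"] Lm xF by simp
      show ?thesis
      proof
        assume "dA S (x - 1) dvd x"
        then have "a * 2 ^ Suc j dvd a * 2 ^ p - a * 2 ^ j" using dA x unfolding sv_def by simp
        moreover have "a * 2 ^ Suc j dvd a * 2 ^ p" using pow_dvd[of "Suc j" p] True by simp
        ultimately have "a * 2 ^ Suc j dvd a * 2 ^ p - (a * 2 ^ p - a * 2 ^ j)"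
          by (rule dvd_diff_nat[rotated])
        moreover have "a * 2 ^ j \<le> a * 2 ^ p" using j by simp
        ultimately have "a * 2 ^ Suc j dvd a * 2 ^ j" by simp
        then have "a * 2 ^ Suc j \<le> a * 2 ^ j" using a0 by (intro dvd_imp_le) auto
        then show False using a0 by simp
      qed
    next
      case False
      then have "dA S (x - 1) = 0" using dA_S0[of "x-1"] Lm xF j by simp
      then show ?thesis using xp by simp
    qed
    then show "x \<in> Xs F S" unfolding Xs_def using xS xp xF by simp
  qed
qed

lemma card_Xs: "card (Xs F S) = p"
proof -
  have "inj_on s {..<p}"
  proof (rule inj_onI)
    fix i j assume "i \<in> {..<p}" "j \<in> {..<p}" "s i = s j"
    then show "i = j" using sv_strict[of i j p a] sv_strict[of j i p a] a0
      by (cases i j rule: linorder_cases) auto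
  qed
  then show ?thesis unfolding Xs_eq by (simp add: card_image)
qed

end


theorem corollary52:
  fixes F p :: nat
  assumes "F > 0" and "p > 0"
  shows "(\<exists>S\<in>Sat F. Sat_rank F S = p) \<longleftrightarrow>
         (LEAST a::nat. a > 0 \<and> \<not> a dvd F) * (2 ^ p - 1) < F"
proof
  assume "\<exists>S\<in>Sat F. Sat_rank F S = p"
  then obtain S where S: "S \<in> Sat F" "Sat_rank F S = p" by blast
  then show "(LEAST a::nat. a > 0 \<and> \<not> a dvd F) * (2 ^ p - 1) < F"
    using forward[OF S(1)] rank_eq[OF S(1)] assms by simp
next
  define a where "a = (LEAST a::nat. a > 0 \<and> \<not> a dvd F)"
  assume sm: "(LEAST a::nat. a > 0 \<and> \<not> a dvd F) * (2 ^ p - 1) < F"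
  have "a > 0 \<and> \<not> a dvd F" unfolding a_def
    by (rule LeastI[of _ "F+1"]) (use assms in \<open>auto dest: dvd_imp_le\<close>)
  then interpret c: cons F a p using sm assms a_def by unfold_locales auto
  show "\<exists>S\<in>Sat F. Sat_rank F S = p"
    using c.inSat rank_eq[OF c.inSat] c.card_Xs by (intro bexI[of _ "Sc F a p"]) auto
qed

end
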